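(* Let $2\le k\le d$, suppose dimension $k$ is just rotating (after some step $N\le i$), and let $a=\lambda x^{(i)}_{k-1}$ and $b=x^{(i)}_k$. Suppose that $\theta_g\le\pi/2$, $\gamma(i)>\pi/2$ and $|a+b|>|a|$. Then $\langle\lambda[a+b],[\lambda b]\rangle\le\pi/2$, entailing $\gamma(i+1)\le\phi(i+1)\le\pi/2$.
   Context: Fix an integer $R\ge2$ and $\theta_g=\pi/R$. Polar rounding on $\mathbb{C}$: for $z=Ae^{i\theta}$, $[z]=[A]e^{i[\theta]}$, where $[A]$ is a fixed real rounding function of the modulus and $[\theta]$ is the multiple of $\theta_g$ closest to $\theta$ (deterministic tie-breaking). Let $\lambda\in\mathbb{C}$ be algebraic with $|\lambda|=1$ and $M$ the $d\times d$ Jordan block with eigenvalue $\lambda$. The orbit is $x^{(0)}\in\mathbb{C}^d$ with rounded entries and $x^{(i+1)}_j=[\lambda x^{(i)}_j+x^{(i)}_{j+1}]$ for $j<d$, $x^{(i+1)}_d=[\lambda x^{(i)}_d]$. Dimension $k$ is just rotating after position $N$ if $x^{(i+1)}_k=[\lambda x^{(i)}_k]$ for all $i\ge N$. For $a,b\in\mathbb{C}$ (as vectors in $\mathbb{R}^2$), $\langle a,b\rangle\in[0,\pi]$ is the smallest angle between them. Define $\phi(i)=\langle\lambda x^{(i)}_{k-1},x^{(i)}_k\rangle$ and $\gamma(i)=\langle\lambda x^{(i)}_{k-1}+x^{(i)}_k,\lambda x^{(i)}_{k-1}\rangle$. *)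

theory Defs
  imports "HOL-Analysis.Analysis" "HOL-Computational_Algebra.Polynomial"
begin

definition theta_g :: "nat \<Rightarrow> real" where
  "theta_g R = pi / real R"

text \<open>Polar rounding [z] = [A] e^{i [theta]} with z = A e^{i theta}, theta = Arg z in (-pi,pi];
  rA is the fixed rounding function of the modulus; [theta] is the multiple of
  theta_g nearest to theta, ties broken deterministically (upwards, via round).\<close>
definition prnd :: "(real \<Rightarrow> real) \<Rightarrow> nat \<Rightarrow> complex \<Rightarrow> complex" where
  "prnd rA R z = complex_of_real (rA (cmod z)) *
      cis (theta_g R * real_of_int (round (Arg z / theta_g R)))"

text \<open>Smallest angle in [0,pi] between a and b viewed as vectors of R^2.
  (If one of them is 0, this gives pi/2 by the convention x / 0 = 0.)\<close>
definition cangle :: "complex \<Rightarrow> complex \<Rightarrow> real" where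
  "cangle a b = arccos (Re (a * cnj b) / (cmod a * cmod b))"

text \<open>Rounded orbit of the d x d Jordan block with eigenvalue lam; coordinates 1..d.\<close>
definition is_orbit ::
  "(real \<Rightarrow> real) \<Rightarrow> nat \<Rightarrow> complex \<Rightarrow> nat \<Rightarrow> (nat \<Rightarrow> nat \<Rightarrow> complex) \<Rightarrow> bool" where
  "is_orbit rA R lam d x \<longleftrightarrow>
     (\<forall>j\<in>{1..d}. \<exists>z. x 0 j = prnd rA R z) \<and>
     (\<forall>i. \<forall>j\<in>{1..<d}. x (Suc i) j = prnd rA R (lam * x i j + x i (Suc j))) \<and>
     (\<forall>i. x (Suc i) d = prnd rA R (lam * x i d))"

definition just_rotating ::
  "(real \<Rightarrow> real) \<Rightarrow> nat \<Rightarrow> complex \<Rightarrow> (nat \<Rightarrow> nat \<Rightarrow> complex) \<Rightarrow> nat \<Rightarrow> nat \<Rightarrow> bool" where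
  "just_rotating rA R lam x k N \<longleftrightarrow>
     (\<forall>i\<ge>N. x (Suc i) k = prnd rA R (lam * x i k))"

definition phi_ang :: "complex \<Rightarrow> (nat \<Rightarrow> nat \<Rightarrow> complex) \<Rightarrow> nat \<Rightarrow> nat \<Rightarrow> real" where
  "phi_ang lam x k i = cangle (lam * x i (k - 1)) (x i k)"

definition gamma_ang :: "complex \<Rightarrow> (nat \<Rightarrow> nat \<Rightarrow> complex) \<Rightarrow> nat \<Rightarrow> nat \<Rightarrow> real" where
  "gamma_ang lam x k i = cangle (lam * x i (k - 1) + x i k) (lam * x i (k - 1))"

end

theory Submission
  imports Defs
begin


lemma round_shift: "round (y + of_int T :: real) = round y + T"
  proof -
  have "y + of_int T + 1/2 = (y + 1/2) + of_int T" by simp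
  then show ?thesis unfolding round_def by (metis floor_add_int)
qed

lemma cos_shift_int: "cos (x + 2 * pi * of_int n) = cos x"
proof -
  have "sin (x + 2 * pi * of_int n) = sin x \<and> cos (x + 2 * pi * of_int n) = cos x"
    by (subst sin_cos_eq_iff) auto
  then show ?thesis by simp
qed

lemma cis_eq_imp: "cis a = cis b \<Longrightarrow> \<exists>n::int. a = b + 2 * pi * n"
proof -
  assume "cis a = cis b"
  then have "sin a = sin b \<and> cos a = cos b"
    by (metis cis.sel)
  then show ?thesis using sin_cos_eq_iff by blast
qed

lemma Arg_mult_mod: "z \<noteq> 0 \<Longrightarrow> w \<noteq> 0 \<Longrightarrow> \<exists>n::int. Arg (z * w) = Arg z + Arg w + 2 * pi * n"
proof -
  assume "z \<noteq> 0" "w \<noteq> 0"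
  then have "cis (Arg (z*w)) = cis (Arg z + Arg w)"
    by (simp add: cis_Arg sgn_mult flip: cis_mult)
  then show ?thesis by (rule cis_eq_imp)
qed

lemma Arg_rcis_mod: "\<rho> > 0 \<Longrightarrow> \<exists>n::int. Arg (complex_of_real \<rho> * cis t) = t + 2 * pi * n"
proof -
  assume "\<rho> > 0"
  then have "cis (Arg (complex_of_real \<rho> * cis t)) = cis t"
    by (simp add: cis_Arg sgn_mult sgn_of_real)
  then show ?thesis by (rule cis_eq_imp)
qed

lemma cangle_le: assumes "Re (u * cnj v) \<ge> 0" shows "cangle u v \<le> pi / 2"
proof -
  let ?t = "Re (u * cnj v) / (cmod u * cmod v)"
  have "Re (u * cnj v) \<le> cmod u * cmod v"
    using complex_Re_le_cmod[of "u * cnj v"] by (simp add: norm_mult)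
  then have "?t \<le> 1"
    by (cases "cmod u * cmod v = 0") (auto simp: divide_le_eq)
  moreover have "?t \<ge> 0" using assms by simp
  ultimately have "arccos ?t \<le> arccos 0"
    by (intro arccos_le_arccos) auto
  then show ?thesis by (simp add: cangle_def)
qed

lemma cangle_gt: "cangle u v > pi / 2 \<Longrightarrow> Re (u * cnj v) < 0"
  using cangle_le[of u v] by linarith

lemma gamma_le: assumes p0: "Re (u * cnj v) \<ge> 0" shows "cangle (u + v) u \<le> cangle u v"
proof (cases "u = 0 \<or> v = 0")
  case True
  then show ?thesis
  proof
    assume "u = 0" then show ?thesis by (simp add: cangle_def)
  next
    assume v: "v = 0"
    have "cangle u u \<le> pi / 2"
    proof (cases "u = 0")
      case False
      have "Re (u * cnj u) = cmod u * cmod u"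
        by (simp add: complex_mult_cnj cmod_power2 flip: power2_eq_square)
      then show ?thesis using False by (simp add: cangle_def)
    qed (simp add: cangle_def)
    then show ?thesis using v by (simp add: cangle_def)
  qed
next
  case False
  then have u: "u \<noteq> 0" and v: "v \<noteq> 0" by auto
  define A where "A = cmod u"
  define B where "B = cmod v"
  define C where "C = cmod (u + v)"
  define p where "p = Re (u * cnj v)"
  have A: "A > 0" using u by (simp add: A_def)
  have B: "B > 0" using v by (simp add: B_def)
  have p: "p \<ge> 0" using p0 by (simp add: p_def)
  have pAB: "p * p \<le> (A*B) * (A*B)"
  proof -
    have "\<bar>p\<bar> \<le> A * B" using abs_Re_le_cmod[of "u * cnj v"] by (simp add: p_def A_def B_def norm_mult)
    then show ?thesis using p by (intro mult_mono) auto
  qed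
  have C2: "C * C = A*A + B*B + 2*p"
    by (simp add: C_def A_def B_def p_def flip: power2_eq_square add: cmod_power2 algebra_simps power2_sum)
  have C0: "C \<ge> 0" by (simp add: C_def)
  have ReG: "Re ((u + v) * cnj u) = A*A + p"
    by (simp add: A_def p_def algebra_simps flip: power2_eq_square add: cmod_power2)
  have C: "C > 0"
  proof -
    have "C * C > 0" using C2 A B p by (simp add: add_pos_nonneg)
    then show ?thesis using C0 by (cases "C = 0") auto
  qed
  have i1: "p * C \<le> B * (A*A + p)"
  proof (rule power2_le_imp_le)
    have "(p*C)^2 = p*p*(C*C)" by (simp add: power2_eq_square algebra_simps)
    also have "\<dots> = p*p*(A*A + B*B + 2*p)" using C2 by simp
    also have "\<dots> \<le> (B * (A*A + p))^2"
    proof -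
      have "p*p*(A*A) \<le> (A*B)*(A*B)*(A*A)" using pAB by (intro mult_right_mono) auto
      moreover have "p*p*(2*p) \<le> (A*B)*(A*B)*(2*p)" using pAB p by (intro mult_right_mono) auto
      ultimately show ?thesis by (simp add: power2_eq_square algebra_simps)
    qed
    finally show "(p*C)^2 \<le> (B * (A*A + p))^2" .
    show "0 \<le> B * (A*A + p)" using B p by simp
  qed
  have i2: "A*A + p \<le> C * A"
  proof (rule power2_le_imp_le)
    have "(A*A+p)^2 \<le> (C*C) * (A*A)"
      unfolding C2 using pAB by (simp add: power2_eq_square algebra_simps)
    then show "(A*A+p)^2 \<le> (C*A)^2" by (simp add: power2_eq_square algebra_simps)
    show "0 \<le> C * A" using C A by simp
  qed
  have "arccos ((A*A + p) / (C * A)) \<le> arccos (p / (A * B))"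
  proof (rule arccos_le_arccos)
    show "-1 \<le> p / (A*B)" using p A B by (smt (verit) divide_nonneg_pos mult_pos_pos)
    show "p / (A*B) \<le> (A*A + p) / (C*A)"
      using i1 A B C by (simp add: divide_simps) (simp add: algebra_simps mult_left_mono)
    show "(A*A + p) / (C*A) \<le> 1" using i2 A C by (simp add: divide_simps)
  qed
  then show ?thesis
    unfolding cangle_def ReG by (simp add: A_def B_def C_def p_def)
qed


lemma Arg_small:
  assumes "\<bar>Im w\<bar> < Re w" shows "\<bar>Arg w\<bar> < pi / 4"
proof -
  have r: "Re w > 0" using assms by linarith
  have "Im w < Re w" "- Im w < Re w" using assms by linarith+
  then have "Im w / Re w < 1" "(- Im w) / Re w < 1" using r by (simp_all only: divide_less_eq_1_pos)
  then have "-1 < Im w / Re w" "Im w / Re w < 1" by (simp_all only: minus_divide_left)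
  then have "arctan (-1) < arctan (Im w / Re w)" "arctan (Im w / Re w) < arctan 1"
    by (simp_all only: arctan_less_iff)
  then have "- (pi/4) < arctan (Im w / Re w)" "arctan (Im w / Re w) < pi/4"
    by (simp_all only: arctan_one arctan_minus)
  then show ?thesis unfolding arg_conv_arctan[OF r] by linarith
qed


lemma geo:
  assumes g: "Re ((a+b)*cnj a) < 0" and n: "cmod (a+b) > cmod a" and b: "b \<noteq> 0"
  shows "\<bar>Im ((a+b)/b)\<bar> < Re ((a+b)/b)"
proof -
  define c where "c = a / b"
  have a: "a = c * b" using b by (simp add: c_def)
  have e: "(a+b)/b = c + 1" using b by (simp add: a field_simps)
  have "Re ((a+b)*cnj a) = (cmod b)^2 * Re ((c+1)*cnj c)"
  proof -
    have "(a+b)*cnj a = ((c+1)*cnj c) * (b * cnj b)" by (simp add: a algebra_simps)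
    also have "b * cnj b = complex_of_real ((cmod b)^2)" by (simp add: complex_mult_cnj cmod_power2)
    finally show ?thesis by simp
  qed
  with g b have g1: "Re ((c+1)*cnj c) < 0"
    by (smt (verit) mult_nonneg_nonneg zero_le_power2)
  have "cmod (a+b) = cmod (c+1) * cmod b" "cmod a = cmod c * cmod b"
  proof -
    have "a + b = (c+1)*b" by (simp add: a algebra_simps)
    then show "cmod (a+b) = cmod (c+1) * cmod b" by (simp add: norm_mult)
    show "cmod a = cmod c * cmod b" by (simp add: a norm_mult)
  qed
  with n b have n1: "cmod c < cmod (c+1)" by simp
  then have "(cmod c)^2 < (cmod (c+1))^2" by (intro power_strict_mono) auto
  then have n2: "(Re c)^2 + (Im c)^2 < (Re c + 1)^2 + (Im c)^2" by (simp add: cmod_power2)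
  have g2: "(Re c)^2 + (Im c)^2 + Re c < 0" using g1 by (simp add: power2_eq_square algebra_simps)
  define p where "p = Re c"
  define q where "q = Im c"
  have n3: "2*p + 1 > 0" using n2 by (simp add: p_def q_def power2_eq_square algebra_simps)
  have g3: "q*q < - p - p*p" using g2 by (simp add: p_def q_def power2_eq_square algebra_simps)
  have p1: "p + 1 > 0" using n3 by simp
  have "(2*p+1)*(p+1) > 0" using n3 p1 by simp
  then have "q*q < (p+1)*(p+1)" using g3 by (simp add: algebra_simps)
  then have "\<bar>q\<bar>^2 < (p+1)^2" by (simp add: power2_eq_square)
  then have "\<bar>q\<bar> < p + 1" using p1 power2_less_imp_less[of "\<bar>q\<bar>" "p+1"] by linarith
  then have "\<bar>Im c\<bar> < Re c + 1" by (simp only: p_def q_def)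
  then show ?thesis unfolding e by simp
qed



lemma Re_cis_prod:
  "Re (cis f * (complex_of_real r1 * cis t1) * cnj (complex_of_real r2 * cis t2)) = r1 * r2 * cos (f + t1 - t2)"
proof -
  have "cis f * (complex_of_real r1 * cis t1) * cnj (complex_of_real r2 * cis t2)
        = complex_of_real (r1 * r2) * (cis f * cis t1 * cis (-t2))"
    by (simp add: cis_cnj)
  also have "cis f * cis t1 * cis (-t2) = cis (f + t1 - t2)" by (simp add: cis_mult)
  finally have eq: "cis f * (complex_of_real r1 * cis t1) * cnj (complex_of_real r2 * cis t2)
        = complex_of_real (r1 * r2) * cis (f + t1 - t2)" .
  show ?thesis unfolding eq by simp
qed

lemma round_bound:
  fixes nA :: int and R :: nat
  assumes "R \<ge> 2" "\<bar>real_of_int nA\<bar> < real R / 4 + 1/2"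
  shows "2 * \<bar>real_of_int nA\<bar> + 1 \<le> real R"
proof -
  have "4 * \<bar>real_of_int nA\<bar> < real R + 2" using assms(2) by linarith
  then have "4 * \<bar>nA\<bar> < int R + 2" by linarith
  then have "4 * \<bar>nA\<bar> \<le> int R + 1" by linarith
  then have "2 * \<bar>nA\<bar> + 1 \<le> int R" using assms(1) by linarith
  then show ?thesis by linarith
qed

theorem lemma15:
  fixes rA :: "real \<Rightarrow> real" and R d k N i :: nat and lam :: complex
    and x :: "nat \<Rightarrow> nat \<Rightarrow> complex"
  assumes "R \<ge> 2"
    and rA_nonneg: "\<forall>A\<ge>0. rA A \<ge> 0"
    and "algebraic lam" and "cmod lam = 1"
    and "is_orbit rA R lam d x"
    and "2 \<le> k" and "k \<le> d"
    and "just_rotating rA R lam x k N" and "N \<le> i"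
    and "theta_g R \<le> pi / 2"
    and "gamma_ang lam x k i > pi / 2"
    and "cmod (lam * x i (k - 1) + x i k) > cmod (lam * x i (k - 1))"
  shows "cangle (lam * prnd rA R (lam * x i (k - 1) + x i k)) (prnd rA R (lam * x i k)) \<le> pi / 2
       \<and> gamma_ang lam x k (Suc i) \<le> phi_ang lam x k (Suc i)
       \<and> phi_ang lam x k (Suc i) \<le> pi / 2"
proof -
  note orb = assms(5)[unfolded is_orbit_def]
  define th where "th = theta_g R"
  have R2: "real R \<ge> 2" using assms(1) by simp
  have th_pos: "th > 0" using R2 by (simp add: th_def theta_g_def)
  have thR: "th * real R = pi" using R2 by (simp add: th_def theta_g_def)
  define a where "a = lam * x i (k - 1)"
  define b where "b = x i k"
  have km: "k - 1 \<in> {1..<d}" "Suc (k - 1) = k" using assms(6,7) by auto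
  have xa: "x (Suc i) (k - 1) = prnd rA R (a + b)"
    using orb km by (simp add: a_def b_def)
  have xb: "x (Suc i) k = prnd rA R (lam * b)"
    using assms(8,9) by (simp add: just_rotating_def b_def)
  have gam: "Re ((a + b) * cnj a) < 0"
  proof (rule cangle_gt)
    show "cangle (a + b) a > pi / 2" using assms(11) by (simp add: gamma_ang_def a_def b_def)
  qed
  have nrm: "cmod (a + b) > cmod a" using assms(12) by (simp add: a_def b_def)
  have b0: "b \<noteq> 0"
  proof
    assume "b = 0"
    then have "Re ((a + b) * cnj a) = (cmod a)^2" by (simp add: complex_mult_cnj cmod_power2)
    then show False using gam by simp
  qed
  have "\<exists>z. b = prnd rA R z"
  proof (cases i)
    case 0
    then show ?thesis using orb assms(6,7) by (simp add: b_def)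
  next
    case (Suc i')
    show ?thesis
    proof (cases "k < d")
      case True
      then show ?thesis using orb assms(6) Suc by (auto simp: b_def)
    next
      case False
      then have "k = d" using assms(7) by simp
      then show ?thesis using orb Suc by (auto simp: b_def)
    qed
  qed
  then obtain z0 where z0: "b = prnd rA R z0" by blast
  define m where "m = round (Arg z0 / th)"
  define \<rho> where "\<rho> = rA (cmod z0)"
  have b_eq: "b = complex_of_real \<rho> * cis (th * of_int m)"
    using z0 by (simp add: prnd_def th_def m_def \<rho>_def)
  have rho_pos: "\<rho> > 0"
  proof -
    have "\<rho> \<ge> 0" using rA_nonneg by (simp add: \<rho>_def)
    moreover have "\<rho> \<noteq> 0" using b0 b_eq by auto
    ultimately show ?thesis by simp
  qed
  obtain n1 :: int where Argb: "Arg b = th * of_int m + 2 * pi * n1"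
    using Arg_rcis_mod[OF rho_pos, of "th * of_int m"] b_eq by auto
  define w where "w = (a + b) / b"
  have wsm: "\<bar>Arg w\<bar> < pi / 4"
    using Arg_small geo[OF gam nrm b0] by (simp add: w_def)
  have ab: "a + b = w * b" using b0 by (simp add: w_def)
  have ab0: "a + b \<noteq> 0" using nrm by auto
  have w0: "w \<noteq> 0" using ab ab0 by auto
  obtain n2 :: int where Argab: "Arg (a + b) = Arg w + Arg b + 2 * pi * n2"
    using Arg_mult_mod[OF w0 b0] ab by auto
  have lam0: "lam \<noteq> 0" using assms(4) by auto
  obtain n3 :: int where Arglb: "Arg (lam * b) = Arg lam + Arg b + 2 * pi * n3"
    using Arg_mult_mod[OF lam0 b0] by auto
  have twopi: "2 * pi * of_int n = th * of_int (2 * int R * n)" for n :: int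
  proof -
    have "th * of_int (2 * int R * n) = 2 * (th * real R) * of_int n" by (simp add: algebra_simps)
    then show ?thesis using thR by simp
  qed
  define nA where "nA = round (Arg w / th)"
  define nL where "nL = round (Arg lam / th)"
  have r1: "round (Arg (a + b) / th) = nA + (m + 2 * int R * (n1 + n2))"
  proof -
    have "Arg (a + b) = Arg w + th * of_int m + th * of_int (2 * int R * n1) + th * of_int (2 * int R * n2)"
      using Argab Argb twopi[of n1] twopi[of n2] by linarith
    also have "\<dots> = Arg w + th * of_int (m + 2 * int R * (n1 + n2))" by (simp add: algebra_simps)
    finally have "Arg (a + b) = Arg w + th * of_int (m + 2 * int R * (n1 + n2))" .
    then have eqd: "Arg (a + b) / th = Arg w / th + of_int (m + 2 * int R * (n1 + n2))"
      using th_pos by (simp add: field_simps)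
    show ?thesis unfolding eqd nA_def by (rule round_shift)
  qed
  have r2: "round (Arg (lam * b) / th) = nL + (m + 2 * int R * (n1 + n3))"
  proof -
    have "Arg (lam * b) = Arg lam + th * of_int m + th * of_int (2 * int R * n1) + th * of_int (2 * int R * n3)"
      using Arglb Argb twopi[of n1] twopi[of n3] by linarith
    also have "\<dots> = Arg lam + th * of_int (m + 2 * int R * (n1 + n3))" by (simp add: algebra_simps)
    finally have "Arg (lam * b) = Arg lam + th * of_int (m + 2 * int R * (n1 + n3))" .
    then have eqd: "Arg (lam * b) / th = Arg lam / th + of_int (m + 2 * int R * (n1 + n3))"
      using th_pos by (simp add: field_simps)
    show ?thesis unfolding eqd nL_def by (rule round_shift)
  qed
  have lamc: "lam = cis (Arg lam)"
    using lam0 assms(4) by (simp add: cis_Arg sgn_div_norm)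
  define \<rho>1 where "\<rho>1 = rA (cmod (a + b))"
  define \<rho>2 where "\<rho>2 = rA (cmod (lam * b))"
  have rho12: "\<rho>1 \<ge> 0" "\<rho>2 \<ge> 0" using rA_nonneg by (simp_all add: \<rho>1_def \<rho>2_def)
  define E where "E = Arg lam - th * of_int nL + th * of_int nA"
  have Re_eq: "Re (lam * prnd rA R (a + b) * cnj (prnd rA R (lam * b))) = \<rho>1 * \<rho>2 * cos E"
  proof -
    have p1: "prnd rA R (a + b) = complex_of_real \<rho>1 * cis (th * of_int (nA + (m + 2 * int R * (n1 + n2))))"
      using r1 by (simp add: prnd_def \<rho>1_def th_def)
    have p2: "prnd rA R (lam * b) = complex_of_real \<rho>2 * cis (th * of_int (nL + (m + 2 * int R * (n1 + n3))))"
      using r2 by (simp add: prnd_def \<rho>2_def th_def)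
    have arg: "Arg lam + th * of_int (nA + (m + 2 * int R * (n1 + n2))) - th * of_int (nL + (m + 2 * int R * (n1 + n3)))
          = E + 2 * pi * of_int (n2 - n3)"
      using twopi[of "n2 - n3"] by (simp add: E_def algebra_simps)
    show ?thesis
      apply (subst lamc)
      unfolding p1 p2 Re_cis_prod arg cos_shift_int ..
  qed
  have Ebound: "\<bar>E\<bar> \<le> pi / 2"
  proof -
    have h1: "\<bar>of_int nL - Arg lam / th\<bar> \<le> 1/2" unfolding nL_def by (rule of_int_round_abs_le)
    have h2: "\<bar>of_int nA - Arg w / th\<bar> \<le> 1/2" unfolding nA_def by (rule of_int_round_abs_le)
    have h3: "\<bar>Arg w / th\<bar> < real R / 4"
    proof -
      have "\<bar>Arg w\<bar> < th * real R / 4" using wsm thR by simp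
      moreover have "th * real R / 4 = real R / 4 * th" by simp
      ultimately have "\<bar>Arg w\<bar> < real R / 4 * th" by linarith
      then have "\<bar>Arg w\<bar> / th < real R / 4" using th_pos by (simp only: pos_divide_less_eq)
      moreover have "\<bar>Arg w / th\<bar> = \<bar>Arg w\<bar> / th" by (simp only: abs_divide abs_of_pos[OF th_pos])
      ultimately show ?thesis by linarith
    qed
    have "\<bar>real_of_int nA\<bar> < real R / 4 + 1/2" using h2 h3 by linarith
    then have h4: "2 * \<bar>real_of_int nA\<bar> + 1 \<le> real R" using round_bound assms(1) by blast
    have "E = th * ((Arg lam / th - of_int nL) + of_int nA)"
      using th_pos by (simp add: E_def field_simps)
    then have "\<bar>E\<bar> = th * \<bar>(Arg lam / th - of_int nL) + of_int nA\<bar>"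
      using th_pos by (simp add: abs_mult)
    also have "\<dots> \<le> th * (real R / 2)"
      using h1 h4 th_pos by (intro mult_left_mono) linarith+
    also have "\<dots> = pi / 2" using thR by simp
    finally show ?thesis .
  qed
  have "cos E \<ge> 0" using Ebound by (intro cos_ge_zero) linarith+
  then have Re_nn: "Re (lam * prnd rA R (a + b) * cnj (prnd rA R (lam * b))) \<ge> 0"
    using Re_eq rho12 by simp
  have c1: "cangle (lam * prnd rA R (a + b)) (prnd rA R (lam * b)) \<le> pi / 2"
    using cangle_le Re_nn by simp
  have c2: "gamma_ang lam x k (Suc i) \<le> phi_ang lam x k (Suc i)"
    unfolding gamma_ang_def phi_ang_def xa xb using gamma_le Re_nn by simp
  have c3: "phi_ang lam x k (Suc i) \<le> pi / 2"
    unfolding phi_ang_def xa xb using c1 .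
  show ?thesis using c1 c2 c3 by (simp add: a_def b_def)
qed

end
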